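(* Let $G$ be a finite group and let $p,q$ be distinct primes dividing $|G|$. Let $m,n$ be positive integers and suppose that $|G| = p^i q^n$ for some integer $i$ with $1 \le i \le m$. If $p \nmid q^n - 1$ and $q \nmid p^j - 1$ for every $j$ with $1 \le j \le m$, then $G$ has an abelian subgroup of order $pq$. *)

theory Defs
  imports "HOL-Algebra.Algebra"
begin

end

theory Submission
  imports Defs
begin

lemma action_from_fun:
  assumes H: "group H"
    and closed: "\<And>g x. g \<in> carrier H \<Longrightarrow> x \<in> E \<Longrightarrow> f g x \<in> E"
    and one: "\<And>x. x \<in> E \<Longrightarrow> f \<one>\<^bsub>H\<^esub> x = x"
    and mult: "\<And>g h x. g \<in> carrier H \<Longrightarrow> h \<in> carrier H \<Longrightarrow> x \<in> E \<Longrightarrow> f (g \<otimes>\<^bsub>H\<^esub> h) x = f g (f h x)"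
  shows "group_action H E (\<lambda>g. restrict (f g) E)"
proof -
  interpret H: group H by (rule H)
  have bij: "restrict (f g) E \<in> Bij E" if g: "g \<in> carrier H" for g
  proof -
    have inv: "f (inv\<^bsub>H\<^esub> g) (f g x) = x" if "x \<in> E" for x
      using mult[of "inv\<^bsub>H\<^esub> g" g x] one[of x] g that by simp
    have inv2: "f g (f (inv\<^bsub>H\<^esub> g) x) = x" if "x \<in> E" for x
      using mult[of g "inv\<^bsub>H\<^esub> g" x] one[of x] g that by simp
    have "bij_betw (f g) E E"
      apply (rule bij_betw_byWitness[where f'="f (inv\<^bsub>H\<^esub> g)"])
      using inv inv2 closed g by auto
    then show ?thesis unfolding Bij_def
      by (simp add: bij_betw_restrict_eq)
  qed
  have hom: "(\<lambda>g. restrict (f g) E) \<in> hom H (BijGroup E)"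
  proof (rule homI)
    show "restrict (f g) E \<in> carrier (BijGroup E)" if "g \<in> carrier H" for g
      using bij[OF that] by (simp add: BijGroup_def)
    show "restrict (f (g \<otimes>\<^bsub>H\<^esub> h)) E = restrict (f g) E \<otimes>\<^bsub>BijGroup E\<^esub> restrict (f h) E"
      if "g \<in> carrier H" "h \<in> carrier H" for g h
      using bij[OF that(1)] bij[OF that(2)] that mult closed
      by (auto simp: BijGroup_def compose_def restrict_def fun_eq_iff)
  qed
  show ?thesis
    unfolding group_action_def group_hom_def group_hom_axioms_def
    using H group_BijGroup hom by blast
qed

lemma (in group_action) fixed_points_mod:
  assumes fin: "finite E" and finG: "finite (carrier G)" and ord: "order G = r ^ k" and r: "Factorial_Ring.prime r"
  shows "card E mod r = card {x\<in>E. \<forall>g\<in>carrier G. \<phi> g x = x} mod r"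
proof -
  interpret G: group G using group_hom group_hom.axioms(1) by auto
  let ?O = "orbits G E \<phi>"
  let ?F = "{x\<in>E. \<forall>g\<in>carrier G. \<phi> g x = x}"
  have finO: "finite ?O" unfolding orbits_def using fin by simp
  have orbsub: "orbit G \<phi> x \<subseteq> E" if "x \<in> E" for x
    unfolding orbit_def using element_image that by blast
  have cardE: "card E = (\<Sum>orb\<in>?O. card orb)"
    using disjoint_sum[OF fin, of "\<lambda>_. 1::nat"] by simp
  have modorb: "card orb mod r = (if card orb = 1 then 1 else 0) mod r" if orbO: "orb \<in> ?O" for orb
  proof -
    obtain x where x: "x \<in> E" "orb = orbit G \<phi> x" using orbO unfolding orbits_def by blast
    have "card orb dvd r ^ k"
      using orbit_stabilizer_theorem[OF x(1)] x(2) ord by (metis dvd_triv_left)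
    then obtain j where "card orb = r ^ j" using divides_primepow_nat[OF r] by blast
    then show ?thesis
      by (cases j) auto
  qed
  have "card E mod r = (\<Sum>orb\<in>?O. card orb mod r) mod r"
    by (simp add: cardE mod_sum_eq)
  also have "\<dots> = (\<Sum>orb\<in>?O. (if card orb = 1 then 1 else 0) mod r) mod r"
    using modorb by (metis (no_types, lifting) sum.cong)
  also have "\<dots> = (\<Sum>orb\<in>?O. (if card orb = 1 then 1 else 0)) mod r"
    by (simp add: mod_sum_eq)
  also have "(\<Sum>orb\<in>?O. (if card orb = 1 then 1 else 0)) = card {orb\<in>?O. card orb = 1}"
    using finO by (simp add: sum.If_cases Int_def conj_commute)
  also have "{orb\<in>?O. card orb = 1} = (\<lambda>x. {x}) ` ?F"
  proof
    show "{orb\<in>?O. card orb = 1} \<subseteq> (\<lambda>x. {x}) ` ?F"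
    proof clarify
      fix orb assume a: "orb \<in> ?O" "card orb = 1"
      obtain x where x: "x \<in> E" "orb = orbit G \<phi> x" using a unfolding orbits_def by blast
      have "x \<in> orb" using orbit_refl x by simp
      then have ox: "orb = {x}" using a(2) by (metis card_1_singletonE singletonD)
      have "\<phi> g x = x" if "g \<in> carrier G" for g
        using ox x(2) that unfolding orbit_def by blast
      then show "orb \<in> (\<lambda>x. {x}) ` ?F" using ox x(1) by blast
    qed
    show "(\<lambda>x. {x}) ` ?F \<subseteq> {orb\<in>?O. card orb = 1}"
    proof clarify
      fix x assume x: "x \<in> E" "\<forall>g\<in>carrier G. \<phi> g x = x"
      have "orbit G \<phi> x = {x}"
        unfolding orbit_def using x G.one_closed by force
      then show "{x} \<in> ?O \<and> card {x} = 1" unfolding orbits_def using x by auto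
    qed
  qed
  also have "card ((\<lambda>x. {x}) ` ?F) = card ?F"
    by (rule card_image) (auto simp: inj_on_def)
  finally show ?thesis .
qed


lemma (in group) fixed_mod_sub:
  assumes P: "subgroup P G" and fP: "finite P" and cP: "card P = r ^ k" and r: "Factorial_Ring.prime r"
    and fE: "finite E"
    and closed: "\<And>g x. g \<in> P \<Longrightarrow> x \<in> E \<Longrightarrow> f g x \<in> E"
    and one: "\<And>x. x \<in> E \<Longrightarrow> f \<one> x = x"
    and mult: "\<And>g h x. g \<in> P \<Longrightarrow> h \<in> P \<Longrightarrow> x \<in> E \<Longrightarrow> f (g \<otimes> h) x = f g (f h x)"
  shows "card E mod r = card {x\<in>E. \<forall>g\<in>P. f g x = x} mod r"
proof -
  have "group_action (G\<lparr>carrier := P\<rparr>) E (\<lambda>g. restrict (f g) E)"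
    by (rule action_from_fun) (use assms subgroup_imp_group in auto)
  then have "card E mod r = card {x\<in>E. \<forall>g\<in>carrier (G\<lparr>carrier := P\<rparr>). restrict (f g) E x = x} mod r"
    by (rule group_action.fixed_points_mod) (use assms in \<open>auto simp: order_def\<close>)
  moreover have "{x\<in>E. \<forall>g\<in>carrier (G\<lparr>carrier := P\<rparr>). restrict (f g) E x = x} = {x\<in>E. \<forall>g\<in>P. f g x = x}"
    by auto
  ultimately show ?thesis by simp
qed

definition cj :: "('a, 'b) monoid_scheme \<Rightarrow> 'a \<Rightarrow> 'a set \<Rightarrow> 'a set"
  where "cj G g H = (\<lambda>h. g \<otimes>\<^bsub>G\<^esub> h \<otimes>\<^bsub>G\<^esub> inv\<^bsub>G\<^esub> g) ` H"

lemma (in group) cj_one: "H \<subseteq> carrier G \<Longrightarrow> cj G \<one> H = H"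
  unfolding cj_def by (auto simp: image_def subset_iff)

lemma (in group) cj_mult:
  assumes "g \<in> carrier G" "h \<in> carrier G" "H \<subseteq> carrier G"
  shows "cj G (g \<otimes> h) H = cj G g (cj G h H)"
  unfolding cj_def image_image using assms
  by (intro image_cong refl) (auto simp: inv_mult_group m_assoc subset_iff)

lemma (in group) cj_subset: "g \<in> carrier G \<Longrightarrow> H \<subseteq> carrier G \<Longrightarrow> cj G g H \<subseteq> carrier G"
  unfolding cj_def by auto

lemma (in group) cj_card: "g \<in> carrier G \<Longrightarrow> H \<subseteq> carrier G \<Longrightarrow> card (cj G g H) = card H"
  unfolding cj_def by (rule card_image) (auto simp: inj_on_def subset_iff)

lemma (in group) cj_subgroup:
  assumes H: "subgroup H G" and g: "g \<in> carrier G"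
  shows "subgroup (cj G g H) G"
proof (rule subgroupI)
  have sub: "H \<subseteq> carrier G" using H subgroup.subset by blast
  show "cj G g H \<subseteq> carrier G" using cj_subset[OF g sub] .
  show "cj G g H \<noteq> {}" unfolding cj_def using subgroup.one_closed[OF H] by auto
  show "inv a \<in> cj G g H" if a: "a \<in> cj G g H" for a
  proof -
    obtain h where h: "h \<in> H" "a = g \<otimes> h \<otimes> inv g" using a unfolding cj_def by auto
    have "inv a = g \<otimes> inv h \<otimes> inv g"
      using h sub g by (simp add: inv_mult_group m_assoc subset_iff)
    then show ?thesis unfolding cj_def using subgroup.m_inv_closed[OF H h(1)] by auto
  qed
  show "a \<otimes> b \<in> cj G g H" if ab: "a \<in> cj G g H" "b \<in> cj G g H" for a b
  proof -
    obtain h where h: "h \<in> H" "a = g \<otimes> h \<otimes> inv g" using ab unfolding cj_def by auto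
    obtain k where k: "k \<in> H" "b = g \<otimes> k \<otimes> inv g" using ab unfolding cj_def by auto
    have hk: "h \<in> carrier G" "k \<in> carrier G" using h k sub by auto
    have "a \<otimes> b = g \<otimes> (h \<otimes> k) \<otimes> inv g"
      using h k hk g by (simp add: m_assoc) (simp add: m_assoc[symmetric])
    then show ?thesis unfolding cj_def using subgroup.m_closed[OF H h(1) k(1)] by auto
  qed
qed

lemma (in group) cj_self:
  assumes H: "subgroup H G" and h: "h \<in> H"
  shows "cj G h H = H"
proof -
  have sub: "H \<subseteq> carrier G" using H subgroup.subset by blast
  have hc: "h \<in> carrier G" using h sub by auto
  show ?thesis
  proof
    show "cj G h H \<subseteq> H" unfolding cj_def
      using H h by (auto intro!: subgroup.m_closed subgroup.m_inv_closed)
    show "H \<subseteq> cj G h H"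
    proof
      fix k assume k: "k \<in> H"
      have kc: "k \<in> carrier G" using k sub by auto
      have "k = h \<otimes> (inv h \<otimes> k \<otimes> h) \<otimes> inv h"
        using hc kc by (simp add: m_assoc) (simp add: m_assoc[symmetric])
      moreover have "inv h \<otimes> k \<otimes> h \<in> H"
        using H h k by (auto intro!: subgroup.m_closed subgroup.m_inv_closed)
      ultimately show "k \<in> cj G h H" unfolding cj_def by blast
    qed
  qed
qed


lemma (in group) sylow_unique_fixed:
  assumes fin: "finite (carrier G)"
    and Q: "subgroup Q G" and Q': "subgroup Q' G" and cQ: "card Q' = card Q"
    and N: "subgroup N G" and QN: "Q \<subseteq> N" and Q'N: "Q' \<subseteq> N"
    and Nfix: "\<And>g. g \<in> N \<Longrightarrow> cj G g Q' = Q'"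
    and r: "Factorial_Ring.prime r" and cQr: "card Q = r ^ k"
    and ordG: "order G = card Q * m" and nd: "\<not> r dvd m"
  shows "Q = Q'"
proof -
  have subQ: "Q \<subseteq> carrier G" using Q subgroup.subset by blast
  have subQ': "Q' \<subseteq> carrier G" using Q' subgroup.subset by blast
  have subN: "N \<subseteq> carrier G" using N subgroup.subset by blast
  have finQ: "finite Q" "finite Q'" "finite N" using subQ subQ' subN fin finite_subset by blast+
  have cQpos: "card Q > 0" using finQ subgroup.one_closed[OF Q] card_gt_0_iff by blast
  define E where "E = (\<lambda>g. Q' #> g) ` N"
  interpret GN: group "G\<lparr>carrier := N\<rparr>" using subgroup_imp_group[OF N] .
  have sQ'N: "subgroup Q' (G\<lparr>carrier := N\<rparr>)" using subgroup_incl[OF Q' N Q'N] .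
  have "card (rcosets\<^bsub>G\<lparr>carrier := N\<rparr>\<^esub> Q') * card Q' = order (G\<lparr>carrier := N\<rparr>)"
    using GN.lagrange[OF sQ'N] .
  moreover have "rcosets\<^bsub>G\<lparr>carrier := N\<rparr>\<^esub> Q' = E"
    unfolding RCOSETS_def E_def r_coset_def by auto
  ultimately have cE: "card E * card Q = card N" using cQ by (simp add: order_def)
  have "card (rcosets N) * card N = order G" using lagrange[OF N] .
  then have "card E * card Q dvd card Q * m" using cE ordG by (metis dvd_triv_right)
  then have "card E dvd m" using cQpos by (simp add: mult.commute)
  then have ndE: "\<not> r dvd card E" using nd dvd_trans by blast
  have finE: "finite E" unfolding E_def using finQ by simp
  have Eeq: "Z \<in> E \<Longrightarrow> \<exists>g\<in>N. Z = Q' #> g" for Z unfolding E_def by auto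
  have "card E mod r = card {Z\<in>E. \<forall>h\<in>Q. Z #> inv h = Z} mod r"
  proof (rule fixed_mod_sub[OF Q finQ(1) cQr r finE])
    show "Z #> inv h \<in> E" if hZ: "h \<in> Q" "Z \<in> E" for h Z
    proof -
      obtain g where g: "g \<in> N" "Z = Q' #> g" using Eeq hZ(2) by blast
      have "Z #> inv h = Q' #> (g \<otimes> inv h)"
        using g hZ(1) subQ subQ' subN coset_mult_assoc[of Q' g "inv h"] by auto
      moreover have "g \<otimes> inv h \<in> N"
        using g hZ(1) QN N by (auto intro!: subgroup.m_closed subgroup.m_inv_closed)
      ultimately show ?thesis unfolding E_def by blast
    qed
    show "Z #> inv \<one> = Z" if ZE: "Z \<in> E" for Z
    proof -
      obtain g where g: "g \<in> N" "Z = Q' #> g" using Eeq ZE by blast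
      have "Z \<subseteq> carrier G" using g subN subQ' r_coset_subset_G by blast
      then show ?thesis by simp
    qed
    show "Z #> inv (g \<otimes> h) = (Z #> inv h) #> inv g" if ghZ: "g \<in> Q" "h \<in> Q" "Z \<in> E" for g h Z
    proof -
      obtain a where a: "a \<in> N" "Z = Q' #> a" using Eeq ghZ(3) by blast
      have "Z \<subseteq> carrier G" using a subN subQ' r_coset_subset_G by blast
      moreover have "g \<in> carrier G" "h \<in> carrier G" using ghZ subQ by auto
      ultimately show ?thesis
        by (simp add: coset_mult_assoc inv_mult_group)
    qed
  qed
  then have "card {Z\<in>E. \<forall>h\<in>Q. Z #> inv h = Z} \<noteq> 0"
    using ndE by (metis dvd_eq_mod_eq_0 mod_0)
  then have "{Z\<in>E. \<forall>h\<in>Q. Z #> inv h = Z} \<noteq> {}" by (metis card.empty)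
  then obtain Z where Z: "Z \<in> E" "\<forall>h\<in>Q. Z #> inv h = Z" by blast
  obtain g where g: "g \<in> N" "Z = Q' #> g" using Eeq Z(1) by blast
  have gc: "g \<in> carrier G" using g subN by auto
  have "Q \<subseteq> Q'"
  proof
    fix h assume h: "h \<in> Q"
    have hc: "h \<in> carrier G" using h subQ by auto
    have "g \<in> Z" using g rcos_self[OF gc Q'] by simp
    then have "g \<otimes> inv h \<in> Z #> inv h" unfolding r_coset_def by auto
    then have "g \<otimes> inv h \<in> Q' #> g" using Z(2) h g by simp
    then obtain k where k: "k \<in> Q'" "g \<otimes> inv h = k \<otimes> g" unfolding r_coset_def by auto
    have kc: "k \<in> carrier G" using k subQ' by auto
    have "inv h = inv g \<otimes> k \<otimes> inv (inv g)"
    proof -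
      have "inv g \<otimes> (g \<otimes> inv h) = inv g \<otimes> (k \<otimes> g)" using k by simp
      then show ?thesis using gc hc kc by (simp add: m_assoc[symmetric])
    qed
    moreover have "inv g \<in> N" using subgroup.m_inv_closed[OF N g(1)] .
    moreover have "inv g \<otimes> k \<otimes> inv (inv g) \<in> cj G (inv g) Q'"
      unfolding cj_def using k(1) by (rule imageI)
    ultimately have "inv h \<in> cj G (inv g) Q'" by simp
    then have "inv h \<in> Q'" using Nfix[OF \<open>inv g \<in> N\<close>] by simp
    then show "h \<in> Q'" using Q' hc by (metis inv_inv subgroup.m_inv_closed)
  qed
  then show ?thesis using cQ finQ by (simp add: card_subset_eq)
qed


lemma (in group) comm_pow:
  assumes xc: "x \<in> carrier G" and yc: "y \<in> carrier G" and xy: "x \<otimes> y = y \<otimes> x"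
  shows "x \<otimes> y [^] (k::nat) = y [^] k \<otimes> x"
proof (induction k)
  case 0 then show ?case using assms by simp
next
  case (Suc k)
  have yk: "y [^] k \<in> carrier G" using yc by simp
  have "x \<otimes> y [^] Suc k = x \<otimes> (y [^] k \<otimes> y)" by simp
  also have "\<dots> = (x \<otimes> y [^] k) \<otimes> y" using xc yc yk by (simp only: m_assoc)
  also have "\<dots> = (y [^] k \<otimes> x) \<otimes> y" using Suc.IH by simp
  also have "\<dots> = y [^] k \<otimes> (x \<otimes> y)" using xc yc yk by (simp only: m_assoc)
  also have "\<dots> = y [^] k \<otimes> (y \<otimes> x)" using xy by simp
  also have "\<dots> = (y [^] k \<otimes> y) \<otimes> x" using xc yc yk by (simp only: m_assoc)
  also have "\<dots> = y [^] Suc k \<otimes> x" by simp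
  finally show ?case .
qed

lemma (in group) ord_dvd_subgroup_card:
  assumes "subgroup H G" "finite H" "x \<in> H"
  shows "ord x dvd card H"
proof -
  have xH: "x \<in> carrier (G\<lparr>carrier := H\<rparr>)" using assms(3) by simp
  have c: "carrier (G\<lparr>carrier := H\<rparr>) = H" by simp
  have o: "\<one>\<^bsub>G\<lparr>carrier := H\<rparr>\<^esub> = \<one>" by simp
  have "x [^] card H = x [^]\<^bsub>G\<lparr>carrier := H\<rparr>\<^esub> order (G\<lparr>carrier := H\<rparr>)"
    unfolding order_def c by (rule nat_pow_consistent)
  also have "\<dots> = \<one>\<^bsub>G\<lparr>carrier := H\<rparr>\<^esub>"
    by (rule group.pow_order_eq_1[OF subgroup_imp_group[OF assms(1)] xH])
  also have "\<dots> = \<one>" by (rule o)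
  finally have xe: "x [^] card H = \<one>" .
  have xc: "x \<in> carrier G" using subgroup.mem_carrier[OF assms(1) assms(3)] .
  show ?thesis using pow_eq_id[OF xc, of "card H"] xe by blast
qed

theorem theorem2p9:
  fixes G (structure)
    and p q m n i :: nat
  assumes "group G"
    and "finite (carrier G)"
    and "Factorial_Ring.prime p" and "Factorial_Ring.prime q" and "p \<noteq> q"
    and "p dvd order G" and "q dvd order G"
    and "m > 0" and "n > 0"
    and "1 \<le> i" and "i \<le> m"
    and "order G = p ^ i * q ^ n"
    and "\<not> p dvd (q ^ n - 1)"
    and "\<forall>j. 1 \<le> j \<and> j \<le> m \<longrightarrow> \<not> q dvd (p ^ j - 1)"
  shows "\<exists>H. subgroup H G \<and> card H = p * q \<and> comm_group (G\<lparr>carrier := H\<rparr>)"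
proof -
  interpret group G by (rule assms(1))
  have fin: "finite (carrier G)" and p: "Factorial_Ring.prime p" and q: "Factorial_Ring.prime q"
    and pq: "p \<noteq> q" and ordG: "order G = p ^ i * q ^ n" and i1: "1 \<le> i" and im: "i \<le> m"
    and ndp: "\<not> p dvd (q ^ n - 1)" and ndq: "\<forall>j. 1 \<le> j \<and> j \<le> m \<longrightarrow> \<not> q dvd (p ^ j - 1)"
    using assms by auto
  have p2: "p \<ge> 2" and q2: "q \<ge> 2" using p q prime_ge_2_nat by auto
  have qndp: "\<not> q dvd p ^ k" for k
    using p q pq by (metis prime_dvd_power_nat primes_dvd_imp_eq)
  have pndq: "\<not> p dvd q ^ k" for k
    using p q pq by (metis prime_dvd_power_nat primes_dvd_imp_eq)
  obtain Q where Q: "subgroup Q G" and cQ: "card Q = q ^ n"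
    using sylow_thm[of q G n "p ^ i"] q assms(1) fin ordG by (auto simp: mult.commute)
  have subQ: "Q \<subseteq> carrier G" using Q subgroup.subset by blast
  have finQ: "finite Q" using subQ fin finite_subset by blast
  define Cs where "Cs = (\<lambda>g. cj G g Q) ` carrier G"
  have CsI: "cj G g Q \<in> Cs" if "g \<in> carrier G" for g unfolding Cs_def using that by blast
  have CsE: "\<exists>g\<in>carrier G. Y = cj G g Q" if "Y \<in> Cs" for Y using that unfolding Cs_def by blast
  have Cssub: "Y \<subseteq> carrier G" if "Y \<in> Cs" for Y using CsE[OF that] cj_subset subQ by blast
  have QCs: "Q \<in> Cs" using CsI[OF one_closed] cj_one[OF subQ] by simp
  have finCs: "finite Cs" unfolding Cs_def using fin by simp
  have act: "group_action G Cs (\<lambda>g. restrict (cj G g) Cs)"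
  proof (rule action_from_fun[OF assms(1)])
    show "cj G g Y \<in> Cs" if "g \<in> carrier G" "Y \<in> Cs" for g Y
      using CsE[OF that(2)] that(1) cj_mult[OF that(1) _ subQ] CsI by (metis m_closed)
    show "cj G \<one>\<^bsub>G\<^esub> Y = Y" if "Y \<in> Cs" for Y using cj_one Cssub[OF that] by simp
    show "cj G (g \<otimes>\<^bsub>G\<^esub> h) Y = cj G g (cj G h Y)" if "g \<in> carrier G" "h \<in> carrier G" "Y \<in> Cs" for g h Y
      using cj_mult that Cssub by simp
  qed
  define stab where "stab = stabilizer G (\<lambda>g. restrict (cj G g) Cs) Q"
  have stab_eq: "stab = {g\<in>carrier G. cj G g Q = Q}"
    unfolding stab_def stabilizer_def using QCs by auto
  have orbQ: "orbit G (\<lambda>g. restrict (cj G g) Cs) Q = Cs"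
  proof -
    have "orbit G (\<lambda>g. restrict (cj G g) Cs) Q = {cj G g Q | g. g \<in> carrier G}"
      unfolding orbit_def using QCs by simp
    then show ?thesis unfolding Cs_def by blast
  qed
  have cs1: "card Cs * card stab = order G"
    using group_action.orbit_stabilizer_theorem[OF act QCs] orbQ stab_def by simp
  have sstab: "subgroup stab G" unfolding stab_def using group_action.stabilizer_subgroup[OF act QCs] .
  have Qstab: "Q \<subseteq> stab" unfolding stab_eq using cj_self[OF Q] subQ by auto
  have "card Q dvd card stab"
  proof -
    interpret GS: group "G\<lparr>carrier := stab\<rparr>" using subgroup_imp_group[OF sstab] .
    have "card (rcosets\<^bsub>G\<lparr>carrier := stab\<rparr>\<^esub> Q) * card Q = order (G\<lparr>carrier := stab\<rparr>)"
      using GS.lagrange[OF subgroup_incl[OF Q sstab Qstab]] .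
    moreover have "order (G\<lparr>carrier := stab\<rparr>) = card stab" unfolding order_def by simp
    ultimately have "card stab = card (rcosets\<^bsub>G\<lparr>carrier := stab\<rparr>\<^esub> Q) * card Q" by simp
    then show ?thesis by (rule dvdI[OF trans[OF _ mult.commute]])
  qed
  then obtain t where t: "card stab = q ^ n * t" using cQ by auto
  have "card Cs * t * q ^ n = p ^ i * q ^ n" using cs1 t ordG by (simp add: ac_simps)
  then have "card Cs * t = p ^ i" using q2 by simp
  then have "card Cs dvd p ^ i" by (metis dvd_triv_left)
  then obtain j where j: "j \<le> i" "card Cs = p ^ j" using divides_primepow_nat[OF p] by blast
  have "card Cs mod q = card {Y\<in>Cs. \<forall>h\<in>Q. cj G h Y = Y} mod q"
  proof (rule fixed_mod_sub[OF Q finQ cQ q finCs])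
    show "cj G g Y \<in> Cs" if "g \<in> Q" "Y \<in> Cs" for g Y
      using CsE[OF that(2)] that(1) subQ cj_mult[OF _ _ subQ] CsI by (metis m_closed subsetD)
    show "cj G \<one> Y = Y" if "Y \<in> Cs" for Y using cj_one Cssub[OF that] by simp
    show "cj G (g \<otimes> h) Y = cj G g (cj G h Y)" if "g \<in> Q" "h \<in> Q" "Y \<in> Cs" for g h Y
    proof -
      have "g \<in> carrier G" "h \<in> carrier G" "Y \<subseteq> carrier G" using that Cssub subQ by auto
      then show ?thesis by (rule cj_mult)
    qed
  qed
  also have "{Y\<in>Cs. \<forall>h\<in>Q. cj G h Y = Y} = {Q}"
  proof
    show "{Q} \<subseteq> {Y\<in>Cs. \<forall>h\<in>Q. cj G h Y = Y}" using QCs cj_self[OF Q] by auto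
    show "{Y\<in>Cs. \<forall>h\<in>Q. cj G h Y = Y} \<subseteq> {Q}"
    proof clarify
      fix Y assume Y: "Y \<in> Cs" "\<forall>h\<in>Q. cj G h Y = Y"
      obtain g where g: "g \<in> carrier G" "Y = cj G g Q" using CsE[OF Y(1)] by blast
      have sY: "subgroup Y G" using cj_subgroup[OF Q g(1)] g by simp
      have cY: "card Y = card Q" using cj_card[OF g(1) subQ] g by simp
      define N where "N = stabilizer G (\<lambda>g. restrict (cj G g) Cs) Y"
      have N_eq: "N = {x\<in>carrier G. cj G x Y = Y}"
        unfolding N_def stabilizer_def using Y(1) by auto
      have sN: "subgroup N G" unfolding N_def using group_action.stabilizer_subgroup[OF act Y(1)] .
      show "Y = Q"
      proof (rule sym, rule sylow_unique_fixed[OF fin Q sY cY sN _ _ _ q cQ])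
        show "Q \<subseteq> N" using Y(2) subQ N_eq by auto
        show "Y \<subseteq> N" using cj_self[OF sY] sY subgroup.subset N_eq by blast
        show "cj G x Y = Y" if "x \<in> N" for x using that N_eq by auto
        show "order G = card Q * p ^ i" using ordG cQ by simp
        show "\<not> q dvd p ^ i" using qndp .
      qed
    qed
  qed
  finally have "p ^ j mod q = 1" using j q2 by simp
  have j0: "j = 0"
  proof (rule ccontr)
    assume "j \<noteq> 0"
    then have "1 \<le> j \<and> j \<le> m" using j im by auto
    moreover have "q dvd p ^ j - 1" using \<open>p ^ j mod q = 1\<close> dvd_minus_mod[of q "p ^ j"] by simp
    ultimately show False using ndq by blast
  qed
  then have "card Cs = 1" using j by simp
  then have "Cs = {Q}" using QCs by (metis card_1_singletonE singletonD)
  then have normal: "cj G g Q = Q" if "g \<in> carrier G" for g using CsI[OF that] by simp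
  obtain P1 where P1: "subgroup P1 G" and cP1: "card P1 = p ^ 1"
    using sylow_thm[of p G 1 "p ^ (i - 1) * q ^ n"] p assms(1) fin ordG i1
    by (auto simp: mult.assoc[symmetric] power_Suc[symmetric] simp del: power_Suc)
  have subP1: "P1 \<subseteq> carrier G" using P1 subgroup.subset by blast
  have finP1: "finite P1" using subP1 fin finite_subset by blast
  have "card Q mod p = card {y\<in>Q. \<forall>g\<in>P1. g \<otimes> y \<otimes> inv g = y} mod p"
  proof (rule fixed_mod_sub[OF P1 finP1 cP1 p finQ])
    show "g \<otimes> y \<otimes> inv g \<in> Q" if "g \<in> P1" "y \<in> Q" for g y
    proof -
      have "g \<otimes> y \<otimes> inv g \<in> cj G g Q" unfolding cj_def using that(2) by (rule imageI)
      then show ?thesis using normal that(1) subP1 by auto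
    qed
    show "\<one> \<otimes> y \<otimes> inv \<one> = y" if "y \<in> Q" for y using that subQ by auto
    show "g \<otimes> h \<otimes> y \<otimes> inv (g \<otimes> h) = g \<otimes> (h \<otimes> y \<otimes> inv h) \<otimes> inv g"
      if "g \<in> P1" "h \<in> P1" "y \<in> Q" for g h y
    proof -
      have "g \<in> carrier G" "h \<in> carrier G" "y \<in> carrier G" using that subQ subP1 by auto
      then show ?thesis by (simp add: inv_mult_group m_assoc)
    qed
  qed
  note cQmod = \<open>card Q mod p = _\<close>
  have "\<exists>y\<in>Q. y \<noteq> \<one> \<and> (\<forall>g\<in>P1. g \<otimes> y \<otimes> inv g = y)"
  proof (rule ccontr)
    assume na: "\<not> (\<exists>y\<in>Q. y \<noteq> \<one> \<and> (\<forall>g\<in>P1. g \<otimes> y \<otimes> inv g = y))"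
    have s1: "{y\<in>Q. \<forall>g\<in>P1. g \<otimes> y \<otimes> inv g = y} \<subseteq> {\<one>}"
      using na by blast
    have "\<forall>g\<in>P1. g \<otimes> \<one> \<otimes> inv g = \<one>"
    proof
      fix g assume "g \<in> P1"
      then have "g \<in> carrier G" using subP1 by blast
      then show "g \<otimes> \<one> \<otimes> inv g = \<one>" by simp
    qed
    then have s2: "\<one> \<in> {y\<in>Q. \<forall>g\<in>P1. g \<otimes> y \<otimes> inv g = y}"
      using subgroup.one_closed[OF Q] by blast
    have "{y\<in>Q. \<forall>g\<in>P1. g \<otimes> y \<otimes> inv g = y} = {\<one>}" using s1 s2 by blast
    then have "q ^ n mod p = 1 mod p" using cQmod cQ by simp
    then have "q ^ n mod p = 1" using p2 by simp
    then have "p dvd q ^ n - 1" using dvd_minus_mod[of p "q ^ n"] by simp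
    then show False using ndp by blast
  qed
  then obtain y where y: "y \<in> Q" "y \<noteq> \<one>" "\<forall>g\<in>P1. g \<otimes> y \<otimes> inv g = y" by blast
  have "\<exists>x\<in>P1. x \<noteq> \<one>"
  proof (rule ccontr)
    assume "\<not> (\<exists>x\<in>P1. x \<noteq> \<one>)"
    then have "P1 \<subseteq> {\<one>}" by blast
    then have "card P1 \<le> card {\<one>}" by (rule card_mono[rotated]) simp
    then show False using cP1 p2 by simp
  qed
  then obtain x where x: "x \<in> P1" "x \<noteq> \<one>" by blast
  have xc: "x \<in> carrier G" using x subP1 by auto
  have yc: "y \<in> carrier G" using y subQ by auto
  have ordx: "ord x = p"
  proof -
    have "ord x dvd p" using ord_dvd_subgroup_card[OF P1 finP1 x(1)] cP1 by simp
    moreover have "ord x \<noteq> 1" using ord_eq_1[OF xc] x by simp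
    moreover have "\<forall>m. m dvd p \<longrightarrow> m = 1 \<or> m = p" using p[unfolded prime_nat_iff] by (rule conjunct2)
    ultimately show ?thesis by blast
  qed
  have "ord y dvd q ^ n" using ord_dvd_subgroup_card[OF Q finQ y(1)] cQ by simp
  then obtain a where a: "a \<le> n" "ord y = q ^ a" using divides_primepow_nat[OF q] by blast
  have a0: "a \<noteq> 0"
  proof
    assume "a = 0"
    then have "ord y = 1" using a(2) by simp
    then have "y = \<one>" using ord_eq_1[OF yc] by simp
    then show False using y(2) by simp
  qed
  obtain b where b: "a = Suc b" using a0 not0_implies_Suc by blast
  define y' where "y' = y [^] (q ^ (a - 1))"
  have y'c: "y' \<in> carrier G" unfolding y'_def using yc by simp
  have ordy': "ord y' = q"
  proof -
    have d: "q ^ (a - 1) dvd ord y" using a(2) b by simp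
    have nz: "q ^ (a - 1) \<noteq> 0" using q2 by simp
    have "ord y' = ord y div q ^ (a - 1)"
      unfolding y'_def by (rule ord_pow[OF yc d nz])
    also have "\<dots> = q ^ Suc b div q ^ b" using a(2) b by simp
    also have "\<dots> = q" using q2 by simp
    finally show ?thesis .
  qed
  have xy: "x \<otimes> y = y \<otimes> x"
  proof -
    have "x \<otimes> y \<otimes> inv x = y" using y(3) x(1) by blast
    then have "x \<otimes> y \<otimes> inv x \<otimes> x = y \<otimes> x" by simp
    then show ?thesis using xc yc by (simp add: m_assoc)
  qed
  have xy': "x \<otimes> y' = y' \<otimes> x"
  proof -
    have "x \<otimes> y [^] (q ^ (a - 1)) = y [^] (q ^ (a - 1)) \<otimes> x" using comm_pow[OF xc yc xy] .
    then show ?thesis unfolding y'_def .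
  qed
  define z where "z = x \<otimes> y'"
  have zc: "z \<in> carrier G" unfolding z_def using xc y'c by simp
  have ordz: "ord z = p * q"
  proof -
    let ?d = "ord z"
    have "ord z dvd p * q" using ord_mul_divides[OF xy' xc y'c] ordx ordy' z_def by simp
    have zd: "z [^] (?d * k) = \<one>" for k using zc by (simp add: pow_eq_id)
    have "x [^] (?d * q) \<otimes> y' [^] (?d * q) = \<one>"
      using zd[of q] pow_mult_distrib[OF xy' xc y'c] z_def by simp
    moreover have "y' [^] (?d * q) = \<one>" using pow_eq_id[OF y'c] ordy' by simp
    ultimately have "x [^] (?d * q) = \<one>" using xc by simp
    then have "p dvd ?d * q" using pow_eq_id[OF xc] ordx by simp
    then have pd: "p dvd ?d" using p pndq[of 1] by (simp add: prime_dvd_mult_iff)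
    have "x [^] (?d * p) \<otimes> y' [^] (?d * p) = \<one>"
      using zd[of p] pow_mult_distrib[OF xy' xc y'c] z_def by simp
    moreover have "x [^] (?d * p) = \<one>" using pow_eq_id[OF xc] ordx by simp
    ultimately have "y' [^] (?d * p) = \<one>" using y'c by simp
    then have "q dvd ?d * p" using pow_eq_id[OF y'c] ordy' by simp
    then have qd: "q dvd ?d" using q qndp[of 1] by (simp add: prime_dvd_mult_iff)
    have "coprime p q" using p q pq by (simp add: primes_coprime)
    then have "p * q dvd ?d" using pd qd by (simp add: divides_mult)
    then show ?thesis using \<open>ord z dvd p * q\<close> by (simp add: dvd_antisym)
  qed
  define H where "H = generate G {z}"
  have sH: "subgroup H G" unfolding H_def using generate_is_subgroup zc by simp
  have cH: "card H = p * q" unfolding H_def using generate_pow_card[OF zc] ordz by simp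
  have Hrange: "H = range (\<lambda>k::int. z [^] k)"
    using carrier_subgroup_generated_by_singleton[OF zc] zc
    unfolding H_def carrier_subgroup_generated by simp
  have "comm_group (G\<lparr>carrier := H\<rparr>)"
  proof (rule group.group_comm_groupI)
    show "group (G\<lparr>carrier := H\<rparr>)" using subgroup_imp_group[OF sH] .
    show "u \<otimes>\<^bsub>G\<lparr>carrier := H\<rparr>\<^esub> v = v \<otimes>\<^bsub>G\<lparr>carrier := H\<rparr>\<^esub> u"
      if "u \<in> carrier (G\<lparr>carrier := H\<rparr>)" "v \<in> carrier (G\<lparr>carrier := H\<rparr>)" for u v
    proof -
      have "u \<in> range (\<lambda>k::int. z [^] k)" "v \<in> range (\<lambda>k::int. z [^] k)"
        using that Hrange by simp_all
      then obtain a b :: int where "u = z [^] a" "v = z [^] b" by blast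
      then show ?thesis using zc by (simp flip: int_pow_mult add: add.commute)
    qed
  qed
  then show ?thesis using sH cH by blast
qed

end
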